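(* Let $q=2^r$ with $r\ge1$. Let $k\ne1$ be an element of $(\mathbb{Z}/q\mathbb{Z})^\times$ and let $\theta_k$ denote multiplication by $k$ on $(\mathbb{Z}/q\mathbb{Z})^\times$. Let $f:(\mathbb{Z}/2^r\mathbb{Z})^\times\to\mathbb{R}$ be a function that is monotonic on $[1,2^r]_\mathbb{Z}$. If $f\circ\theta_k=f$, then $f$ is constant on $[1,2^{r-1}]_\mathbb{Z}$.
   Context: $[a,b]_\mathbb{Z}$ denotes the set of odd integers in the closed interval $[a,b]$; $[1,2^r]_\mathbb{Z}$ is used as the set of representatives of $(\mathbb{Z}/2^r\mathbb{Z})^\times$, and "monotonic on $[1,2^r]_\mathbb{Z}$" means $i\mapsto f(i\bmod 2^r)$ is monotonic on this set of integers. *)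

theory Defs
  imports Complex_Main "HOL-Number_Theory.Cong"
begin

definition odd_Icc :: "int \<Rightarrow> int \<Rightarrow> int set" where
  "odd_Icc a b = {i. odd i \<and> a \<le> i \<and> i \<le> b}"

end

theory Submission
  imports Defs
begin

lemma odd_pow_cong: "odd (k::int) \<Longrightarrow> (2::int)^(Suc n) dvd k^(2^n) - 1"
proof (induction n)
  case 0 then show ?case by (simp add: even_iff_mod_2_eq_zero dvd_eq_mod_eq_0 mod_diff_eq[symmetric])
next
  case (Suc n)
  then obtain t where t: "k^(2^n) - 1 = 2^(Suc n) * t" by (auto elim: dvdE)
  have e: "k^(2^(Suc n)) = (k^(2^n))^2"
    by (simp add: power_mult[symmetric] mult.commute)
  have "k^(2^n) = 2^(Suc n) * t + 1" using t by simp
  hence "k^(2^(Suc n)) - 1 = (2^(Suc n)*t+1)^2 - 1" using e by simp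
  also have "\<dots> = 2*2^(Suc n)*t + 2^(Suc n)*2^(Suc n)*t^2"
    by (simp only: power2_eq_square algebra_simps)
  also have "(2::int)^(Suc n)*2^(Suc n) = 2^(Suc (Suc n)) * 2^n" by (simp only: power_Suc mult_ac)
  also have "2*2^(Suc n)*t + 2^(Suc (Suc n)) * 2^n*t^2 = (2::int)^(Suc (Suc n)) * (t + 2^n * t^2)"
    by (simp only: power_Suc[of 2 "Suc n"] algebra_simps)
  finally show ?case by (rule dvdI)
qed

lemma key_dvd:
  fixes y :: int and m :: nat
  assumes "odd y" "2*2^m dvd (y-1)*(y+1)" "m \<ge> 1"
  shows "2^m dvd y - 1 \<or> 2^m dvd y + 1"
proof -
  have "even (y - 1)" using assms(1) by simp
  then obtain a where a: "y - 1 = 2*a" by (rule evenE)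
  define g :: int where "g = 2^(m-1)"
  have hg: "(2::int)^m = 2*g" using assms(3) unfolding g_def by (cases m) auto
  have y1: "y + 1 = 2*(a+1)" using a by simp
  have dd: "2*(2*g) dvd (2*a)*(2*(a+1))" using assms(2) by (simp only: a y1 hg)
  have e1: "(2::int)*(2*g) = 4*g" by simp
  have e2: "(2*a)*(2*(a+1)) = 4*(a*(a+1))" by simp
  have "(4::int)*g dvd 4*(a*(a+1))" using dd by (simp only: e1 e2)
  hence d: "g dvd a*(a+1)" by (metis dvd_times_left_cancel_iff zero_neq_numeral)
  show ?thesis
  proof (cases "even a")
    case True
    have "odd (a+1)" using True by simp
    hence "coprime g (a+1)" unfolding g_def
      using coprime_power_left_iff coprime_left_2_iff_odd by blast
    hence "g dvd a" using d by (simp add: coprime_dvd_mult_left_iff)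
    thus ?thesis using a hg by simp
  next
    case False
    have "coprime g a" using False unfolding g_def
      using coprime_power_left_iff coprime_left_2_iff_odd by blast
    hence "g dvd a+1" using d by (simp add: coprime_dvd_mult_right_iff)
    hence "2*g dvd 2*(a+1)" by (rule mult_dvd_mono[OF dvd_refl])
    thus ?thesis using y1 hg by (simp only:) simp
  qed
qed

lemma sandwich:
  fixes g :: "int \<Rightarrow> real" and A :: "int set"
  assumes "mono_on A g \<or> antimono_on A g" "a \<in> A" "b \<in> A" "x \<in> A" "a \<le> x" "x \<le> b" "g a = g b"
  shows "g x = g a"
proof (cases "mono_on A g")
  case True
  have "g a \<le> g x" using mono_onD[OF True, of a x] assms by blast
  moreover have "g x \<le> g b" using mono_onD[OF True, of x b] assms by blast
  ultimately show ?thesis using assms by linarith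
next
  case False
  hence M: "antimono_on A g" using assms(1) by blast
  have "g x \<le> g a" using monotone_onD[OF M, of a x] assms by blast
  moreover have "g b \<le> g x" using monotone_onD[OF M, of x b] assms by blast
  ultimately show ?thesis using assms by linarith
qed

theorem lemma4p3:
  fixes r :: nat and k :: int and f :: "int \<Rightarrow> real"
  assumes r: "r \<ge> 1"
    and k_unit: "coprime k (2 ^ r)"
    and k_ne1: "\<not> [k = 1] (mod (2 ^ r))"
    and f_mono: "mono_on (odd_Icc 1 (2 ^ r)) (\<lambda>i. f (i mod 2 ^ r))
               \<or> antimono_on (odd_Icc 1 (2 ^ r)) (\<lambda>i. f (i mod 2 ^ r))"
    and f_inv: "\<forall>a. coprime a (2 ^ r) \<longrightarrow> f ((k * a) mod 2 ^ r) = f (a mod 2 ^ r)"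
  shows "\<forall>i\<in>odd_Icc 1 (2 ^ (r - 1)). \<forall>j\<in>odd_Icc 1 (2 ^ (r - 1)).
           f (i mod 2 ^ r) = f (j mod 2 ^ r)"
proof (cases "r = 1")
  case True
  then show ?thesis by (auto simp: odd_Icc_def)
next
  case False
  hence r2: "r \<ge> 2" using r by simp
  define q :: int where "q = 2^r"
  define h :: int where "h = 2^(r-1)"
  have qh: "q = 2*h" unfolding q_def h_def using r by (cases r) auto
  have h2: "h \<ge> 2" unfolding h_def using r2
    by (metis One_nat_def Suc_1 Suc_le_mono le_diff_conv2 one_le_numeral plus_1_eq_Suc power_increasing power_one_right r)
  have eh: "even h" using qh h2 unfolding h_def using r2 by simp
  have "coprime k 2" using k_unit r by simp
  hence kodd: "odd k" by simp
  have iter: "f ((k^n) mod q) = f (1 mod q)" for n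
  proof (induction n)
    case 0 then show ?case by simp
  next
    case (Suc n)
    have "coprime (k^n) (2^r)" using k_unit by simp
    hence "f ((k * k^n) mod 2^r) = f ((k^n) mod 2^r)" using f_inv by blast
    thus ?case using Suc unfolding q_def by simp
  qed
  define P where "P j \<longleftrightarrow> [k^(2^j) = 1] (mod q)" for j :: nat
  have "P (r-1)" unfolding P_def cong_iff_dvd_diff q_def
    using odd_pow_cong[OF kodd, of "r-1"] r by simp
  define j0 where "j0 = (LEAST j. P j)"
  have Pj0: "P j0" unfolding j0_def by (rule LeastI) fact
  have j0nz: "j0 \<noteq> 0"
  proof
    assume "j0 = 0"
    thus False using Pj0 k_ne1 unfolding P_def q_def by simp
  qed
  have "j0 - 1 < j0" using j0nz by simp
  hence nP: "\<not> P (j0 - 1)" using not_less_Least[of "j0 - 1" P] unfolding j0_def by blast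
  define y where "y = k^(2^(j0-1))"
  have ysq: "y * y = k^(2^j0)" unfolding y_def using j0nz
    by (metis Suc_diff_1 not_gr_zero power_Suc mult_2 power_add)
  have yodd: "odd y" unfolding y_def using kodd by simp
  have "q dvd y*y - 1" using Pj0 ysq unfolding P_def cong_iff_dvd_diff by simp
  hence "2*2^(r-1) dvd (y-1)*(y+1)" using qh unfolding h_def by (simp add: algebra_simps)
  hence hd: "h dvd y - 1 \<or> h dvd y + 1" using key_dvd[OF yodd] r2 unfolding h_def by simp
  define y' where "y' = y mod q"
  have q0: "q > 0" using qh h2 by simp
  have y'b: "0 \<le> y'" "y' < q" unfolding y'_def using q0 by auto
  have y'e: "y' = y - q * (y div q)" unfolding y'_def by (simp add: minus_mult_div_eq_mod)
  have y'odd: "odd y'" using y'e yodd qh by simp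
  have y'1: "y' \<noteq> 1" using nP unfolding P_def y'_def y_def cong_def using q0 qh h2 by auto
  have y'ge1: "y' \<ge> 1" using y'b y'odd by (cases "y' = 0") auto
  have yge: "y' \<ge> h - 1"
  proof -
    from hd show ?thesis
    proof
      assume "h dvd y - 1"
      moreover have "h dvd q * (y div q)" using qh by simp
      ultimately have "h dvd (y - 1) - q * (y div q)" by (rule dvd_diff)
      moreover have "(y - 1) - q * (y div q) = y' - 1" using y'e by simp
      ultimately have "h dvd y' - 1" by simp
      then obtain c where c: "y' - 1 = h*c" by (elim dvdE)
      have "h*c > 0" using c y'1 y'ge1 by simp
      hence "c \<ge> 1" using h2 by (simp add: zero_less_mult_iff)
      hence "h*c \<ge> h" using h2 by simp
      thus ?thesis using c by simp
    next
      assume "h dvd y + 1"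
      moreover have "h dvd q * (y div q)" using qh by simp
      ultimately have "h dvd (y + 1) - q * (y div q)" by (rule dvd_diff)
      moreover have "(y + 1) - q * (y div q) = y' + 1" using y'e by simp
      ultimately have "h dvd y' + 1" by simp
      then obtain c where c: "y' + 1 = h*c" by (elim dvdE)
      have "h*c > 0" using c y'ge1 by simp
      hence "c \<ge> 1" using h2 by (simp add: zero_less_mult_iff)
      hence "h*c \<ge> h" using h2 by simp
      thus ?thesis using c by simp
    qed
  qed
  have fy: "f (y' mod q) = f (1 mod q)" unfolding y'_def y_def using iter by simp
  have A1: "1 \<in> odd_Icc 1 q" using q0 unfolding odd_Icc_def by simp
  have Ay: "y' \<in> odd_Icc 1 q" using y'b y'odd y'ge1 unfolding odd_Icc_def by simp
  have key: "f (i mod q) = f 1" if "i \<in> odd_Icc 1 h" for i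
  proof -
    have io: "odd i" "1 \<le> i" "i \<le> h" using that unfolding odd_Icc_def by auto
    have "i \<noteq> h" using io eh by auto
    hence "i \<le> h - 1" using io by simp
    hence iy: "i \<le> y'" using yge by simp
    have Ai: "i \<in> odd_Icc 1 q" using io qh h2 unfolding odd_Icc_def by simp
    have "(\<lambda>i. f (i mod q)) i = (\<lambda>i. f (i mod q)) 1"
      by (rule sandwich[OF f_mono[folded q_def] A1 Ay Ai]) (use io iy fy in auto)
    thus ?thesis using q0 qh h2 by simp
  qed
  show ?thesis using key unfolding q_def h_def by simp
qed

end
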